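(* Under the hypotheses of the previous lemma (reals $p_j\ge0$, $x_j$, $x_{\{j\}\cup\{j'\}}$ with nonnegative symmetric entries, $x_{\{j\}\cup\{j\}}=x_j\ge 0$, and PSD matrix $X$ with $X_{0,0}=1$, $X_{0,j}=x_j$, $X_{j,j'}=x_{\{j\}\cup\{j'\}}$), let $G\subseteq\{1,\dots,n'\}$, $\bar G=\{1,\dots,n'\}\setminus G$, $L=\sum_{j=1}^{n'}x_jp_j$, $Q=\sum_{j=1}^{n'}x_jp_j^2$, $\bar L=\sum_{j\in\bar G}x_jp_j$, $\bar Q=\sum_{j\in\bar G}x_jp_j^2$, and $R=\sum_{j=1}^{n'}p_j\big(p_1x_{\{j\}\cup\{1\}}+\dots+p_jx_{\{j\}\cup\{j\}}\big)$. Then $R\ge Q$, $R\ge \tfrac12(Q+L^2)$, and $R\ge \tfrac12(\bar Q+Q+(L-\bar L)^2)$. *)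

theory Defs
  imports Complex_Main
begin

definition psd_mat :: "nat \<Rightarrow> (nat \<Rightarrow> nat \<Rightarrow> real) \<Rightarrow> bool" where
  "psd_mat m M \<longleftrightarrow>
     (\<forall>i\<le>m. \<forall>j\<le>m. M i j = M j i) \<and>
     (\<forall>v :: nat \<Rightarrow> real. 0 \<le> (\<Sum>i\<le>m. \<Sum>j\<le>m. v i * M i j * v j))"

definition moment_mat :: "(nat \<Rightarrow> real) \<Rightarrow> (nat \<Rightarrow> nat \<Rightarrow> real) \<Rightarrow> nat \<Rightarrow> nat \<Rightarrow> real" where
  "moment_mat x xx i j =
     (if i = 0 \<and> j = 0 then 1
      else if i = 0 then x j
      else if j = 0 then x i
      else xx i j)"

end

theory Submission
  imports Defs
begin

lemma sym_sum_tri: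
  fixes a :: "nat \<Rightarrow> nat \<Rightarrow> real"
  assumes "\<forall>i\<in>{1..n}. \<forall>j\<in>{1..n}. a i j = a j i"
  shows "(\<Sum>i=1..n. \<Sum>j=1..n. a i j) = 2 * (\<Sum>j=1..n. \<Sum>i=1..j. a j i) - (\<Sum>j=1..n. a j j)"
  using assms
proof (induction n)
  case 0
  then show ?case by simp
next
  case (Suc n)
  have IH: "(\<Sum>i=1..n. \<Sum>j=1..n. a i j) = 2 * (\<Sum>j=1..n. \<Sum>i=1..j. a j i) - (\<Sum>j=1..n. a j j)"
    using Suc by auto
  have s: "(\<Sum>i=1..n. a i (Suc n)) = (\<Sum>i=1..n. a (Suc n) i)"
    using Suc.prems by (intro sum.cong) auto
  have "(\<Sum>i=1..Suc n. \<Sum>j=1..Suc n. a i j)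
      = (\<Sum>i=1..n. \<Sum>j=1..n. a i j) + (\<Sum>i=1..n. a i (Suc n)) + (\<Sum>j=1..n. a (Suc n) j) + a (Suc n) (Suc n)"
    by (simp add: sum.distrib)
  also have "\<dots> = 2 * (\<Sum>j=1..Suc n. \<Sum>i=1..j. a j i) - (\<Sum>j=1..Suc n. a j j)"
    using IH s by simp
  finally show ?case .
qed

lemma restr_sum:
  fixes h :: "nat \<Rightarrow> real"
  assumes "finite U" "A \<subseteq> U"
  shows "(\<Sum>j\<in>U. h j * (if j \<in> A then p j else 0)) = (\<Sum>j\<in>A. h j * p j)"
proof -
  have "(\<Sum>j\<in>U. h j * (if j \<in> A then p j else 0)) = (\<Sum>j\<in>U. if j \<in> A then h j * p j else 0)"
    by (intro sum.cong) auto
  also have "\<dots> = (\<Sum>j\<in>U \<inter> A. h j * p j)" using assms(1) by (simp add: sum.inter_restrict)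
  also have "U \<inter> A = A" using assms(2) by blast
  finally show ?thesis .
qed

lemma psd_bound:
  fixes n' :: nat and p x :: "nat \<Rightarrow> real" and xx :: "nat \<Rightarrow> nat \<Rightarrow> real" and A :: "nat set"
  assumes X_psd: "psd_mat n' (moment_mat x xx)" and A: "A \<subseteq> {1..n'}"
  shows "(\<Sum>j\<in>A. x j * p j) ^ 2 \<le> (\<Sum>i\<in>A. \<Sum>j\<in>A. p i * p j * xx i j)"
proof -
  define c where "c = (\<Sum>j\<in>A. x j * p j)"
  define w where "w i = (if i \<in> A then p i else 0)" for i
  define v where "v i = (if i = 0 then - c else w i)" for i
  define M where "M = moment_mat x xx"
  have fin: "finite A" using A finite_subset by blast
  have U: "{..n'} = insert 0 {1..n'}" by auto
  have lw: "(\<Sum>j=1..n'. x j * w j) = c"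
    unfolding c_def w_def using restr_sum[of "{1..n'}" A x p] A by simp
  have lw2: "(\<Sum>j=1..n'. w j * x j) = c" using lw by (simp add: mult.commute)
  have sw: "(\<Sum>i=1..n'. \<Sum>j=1..n'. w i * xx i j * w j) = (\<Sum>i\<in>A. \<Sum>j\<in>A. p i * p j * xx i j)"
  proof -
    have "(\<Sum>i=1..n'. \<Sum>j=1..n'. w i * xx i j * w j) = (\<Sum>i\<in>A. \<Sum>j=1..n'. w i * xx i j * w j)"
    proof -
      have "(\<Sum>i=1..n'. \<Sum>j=1..n'. w i * xx i j * w j) = (\<Sum>i=1..n'. (\<Sum>j=1..n'. xx i j * w j) * w i)"
        by (simp add: sum_distrib_right sum_distrib_left ac_simps)
      also have "\<dots> = (\<Sum>i\<in>A. (\<Sum>j=1..n'. xx i j * w j) * p i)"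
        unfolding w_def[of i for i] using restr_sum[of "{1..n'}" A "\<lambda>i. \<Sum>j=1..n'. xx i j * w j" p] A
        by (simp add: w_def[symmetric])
      also have "\<dots> = (\<Sum>i\<in>A. \<Sum>j=1..n'. w i * xx i j * w j)"
        by (intro sum.cong refl) (simp add: w_def sum_distrib_left ac_simps)
      finally show ?thesis .
    qed
    also have "\<dots> = (\<Sum>i\<in>A. \<Sum>j\<in>A. p i * p j * xx i j)"
    proof (rule sum.cong[OF refl])
      fix i assume "i \<in> A"
      show "(\<Sum>j=1..n'. w i * xx i j * w j) = (\<Sum>j\<in>A. p i * p j * xx i j)"
        using \<open>i \<in> A\<close> restr_sum[of "{1..n'}" A "\<lambda>j. p i * xx i j" p] A
        by (simp add: w_def ac_simps)
    qed
    finally show ?thesis .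
  qed
  have row0: "(\<Sum>j\<le>n'. v 0 * M 0 j * v j) = c^2 - c * c"
  proof -
    have "(\<Sum>j\<le>n'. v 0 * M 0 j * v j) = c * c + (\<Sum>j=1..n'. (- c) * (x j * w j))"
      unfolding U by (simp add: v_def M_def moment_mat_def power2_eq_square ac_simps)
    also have "\<dots> = c * c - c * c" by (simp add: sum_negf sum_distrib_left[symmetric] lw[simplified])
    finally show ?thesis by (simp add: power2_eq_square)
  qed
  have rowi: "(\<Sum>i=1..n'. \<Sum>j\<le>n'. v i * M i j * v j)
      = - c * c + (\<Sum>i=1..n'. \<Sum>j=1..n'. w i * xx i j * w j)"
  proof -
    have "(\<Sum>i=1..n'. \<Sum>j\<le>n'. v i * M i j * v j)
        = (\<Sum>i=1..n'. (- c) * (w i * x i) + (\<Sum>j=1..n'. w i * xx i j * w j))"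
      unfolding U by (intro sum.cong refl) (simp add: v_def M_def moment_mat_def ac_simps)
    also have "\<dots> = - c * c + (\<Sum>i=1..n'. \<Sum>j=1..n'. w i * xx i j * w j)"
      by (simp add: sum_subtractf sum.distrib sum_negf sum_distrib_left[symmetric] lw2[simplified])
    finally show ?thesis .
  qed
  have "0 \<le> (\<Sum>i\<le>n'. \<Sum>j\<le>n'. v i * M i j * v j)"
    using X_psd unfolding psd_mat_def M_def by blast
  also have "\<dots> = (\<Sum>j\<le>n'. v 0 * M 0 j * v j) + (\<Sum>i=1..n'. \<Sum>j\<le>n'. v i * M i j * v j)"
    by (subst (1) U) simp
  finally have "0 \<le> - c * c + (\<Sum>i\<in>A. \<Sum>j\<in>A. p i * p j * xx i j)"
    using row0 rowi sw by (simp add: power2_eq_square)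
  then show ?thesis unfolding c_def[symmetric] by (simp add: power2_eq_square)
qed

theorem corollary1:
  fixes n' :: nat
    and p x :: "nat \<Rightarrow> real"
    and xx :: "nat \<Rightarrow> nat \<Rightarrow> real"
    and G :: "nat set"
  assumes p_nonneg: "\<forall>j\<in>{1..n'}. p j \<ge> 0"
    and xx_nonneg: "\<forall>j\<in>{1..n'}. \<forall>j'\<in>{1..n'}. xx j j' \<ge> 0"
    and xx_sym: "\<forall>j\<in>{1..n'}. \<forall>j'\<in>{1..n'}. xx j j' = xx j' j"
    and xx_diag: "\<forall>j\<in>{1..n'}. xx j j = x j"
    and x_nonneg: "\<forall>j\<in>{1..n'}. x j \<ge> 0"
    and X_psd: "psd_mat n' (moment_mat x xx)"
    and G_sub: "G \<subseteq> {1..n'}"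
  shows "(\<Sum>j=1..n'. p j * (\<Sum>i=1..j. p i * xx j i)) \<ge> (\<Sum>j=1..n'. x j * p j ^ 2)
       \<and> (\<Sum>j=1..n'. p j * (\<Sum>i=1..j. p i * xx j i))
           \<ge> ((\<Sum>j=1..n'. x j * p j ^ 2) + (\<Sum>j=1..n'. x j * p j) ^ 2) / 2
       \<and> (\<Sum>j=1..n'. p j * (\<Sum>i=1..j. p i * xx j i))
           \<ge> ((\<Sum>j\<in>{1..n'} - G. x j * p j ^ 2) + (\<Sum>j=1..n'. x j * p j ^ 2)
               + ((\<Sum>j=1..n'. x j * p j) - (\<Sum>j\<in>{1..n'} - G. x j * p j)) ^ 2) / 2"
proof -
  define U where "U = {1..n'}"
  define R where "R = (\<Sum>j=1..n'. p j * (\<Sum>i=1..j. p i * xx j i))"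
  define Q where "Q = (\<Sum>j=1..n'. x j * p j ^ 2)"
  define f where "f i j = p i * p j * xx i j" for i j
  define S where "S A = (\<Sum>i\<in>A. \<Sum>j\<in>A. f i j)" for A
  have R_eq: "R = (\<Sum>j=1..n'. \<Sum>i=1..j. f j i)"
    unfolding R_def f_def by (simp add: sum_distrib_left ac_simps)
  have Q_eq: "Q = (\<Sum>j=1..n'. f j j)"
    unfolding Q_def f_def using xx_diag by (intro sum.cong) (auto simp: power2_eq_square)
  have fsym: "\<forall>i\<in>{1..n'}. \<forall>j\<in>{1..n'}. f i j = f j i"
    using xx_sym by (auto simp: f_def)
  have SU: "S U = 2 * R - Q"
    unfolding S_def U_def R_eq Q_eq using sym_sum_tri[OF fsym] .
  have fnn: "\<And>i j. i \<in> U \<Longrightarrow> j \<in> U \<Longrightarrow> 0 \<le> f i j"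
    using p_nonneg xx_nonneg by (auto simp: f_def U_def)
  have P1: "R \<ge> Q"
  proof -
    have "Q = (\<Sum>j=1..n'. f j j)" by (rule Q_eq)
    also have "\<dots> \<le> (\<Sum>j=1..n'. \<Sum>i=1..j. f j i)"
    proof (rule sum_mono)
      fix j assume j: "j \<in> {1..n'}"
      show "f j j \<le> (\<Sum>i=1..j. f j i)"
        by (rule member_le_sum) (use j fnn in \<open>auto simp: U_def\<close>)
    qed
    finally show ?thesis using R_eq by simp
  qed
  define B where "B = U - G"
  have finU: "finite U" by (simp add: U_def)
  have GU: "G \<subseteq> U" using G_sub by (simp add: U_def)
  have finG: "finite G" using GU finU finite_subset by blast
  have finB: "finite B" using finU by (simp add: B_def)
  have SG: "S U \<ge> S G + (\<Sum>j\<in>B. f j j)"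
  proof -
    define g where "g = (\<lambda>(i,j). f i j)"
    have SUc: "S U = sum g (U \<times> U)"
      unfolding S_def g_def by (simp add: sum.cartesian_product)
    have SGc: "S G = sum g (G \<times> G)"
      unfolding S_def g_def by (simp add: sum.cartesian_product)
    have Bc: "(\<Sum>j\<in>B. f j j) = sum g ((\<lambda>j. (j,j)) ` B)"
      by (subst sum.reindex) (auto simp: inj_on_def g_def)
    have disj: "(G \<times> G) \<inter> ((\<lambda>j. (j,j)) ` B) = {}" by (auto simp: B_def)
    have "S G + (\<Sum>j\<in>B. f j j) = sum g ((G \<times> G) \<union> ((\<lambda>j. (j,j)) ` B))"
      using SGc Bc disj finG finB by (simp add: sum.union_disjoint)
    also have "\<dots> \<le> sum g (U \<times> U)"
      by (rule sum_mono2) (use finU GU in \<open>auto simp: B_def g_def intro!: fnn\<close>)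
    finally show ?thesis using SUc by simp
  qed
  have LG: "(\<Sum>j\<in>G. x j * p j) ^ 2 \<le> S G"
    unfolding S_def f_def by (rule psd_bound[OF X_psd G_sub])
  have LU: "(\<Sum>j\<in>U. x j * p j) ^ 2 \<le> S U"
    unfolding S_def f_def U_def by (rule psd_bound[OF X_psd]) simp
  have Bq: "(\<Sum>j\<in>B. f j j) = (\<Sum>j\<in>{1..n'} - G. x j * p j ^ 2)"
    unfolding B_def U_def f_def using xx_diag by (intro sum.cong) (auto simp: power2_eq_square)
  have Ldiff: "(\<Sum>j=1..n'. x j * p j) - (\<Sum>j\<in>{1..n'} - G. x j * p j) = (\<Sum>j\<in>G. x j * p j)"
    using sum.subset_diff[OF GU finU, of "\<lambda>j. x j * p j"] by (simp add: U_def)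
  show ?thesis
    unfolding R_def[symmetric] Q_def[symmetric]
    using P1 SU SG LG LU Bq Ldiff by (simp add: U_def)
qed

end
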